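(* In the setting described in the context, the process $W(t)$ restricted to the set $\mathcal W$ of allocation states is time reversible; more precisely, for all $W,W'\in\mathcal W$ with $W\neq W'$, $$\binom{\alpha}{W}e^{\gamma\Psi(W)}P_{W,W'}=\binom{\alpha}{W'}e^{\gamma\Psi(W')}P_{W',W},$$ where $\binom{\alpha}{W}:=\frac{\prod_x\alpha_x!}{\prod_{x,y}W_{xy}!}$, $P_{W,W'}$ is the transition rate of $W(t)$ from $W$ to $W'$, and $$\Psi(W)=\sum_{y\in\mathcal X}\sum_{s=0}^{W_y}\Big[\lambda_y-\frac{k_cs}{\beta_y}\Big]+k_a\sum_{x,y\in\mathcal X}\sum_{s=0}^{W_{xy}}s .$$
   Context: $\mathcal X$ is a finite set of units, $\mathcal G=(\mathcal X,\mathcal E)$ a directed graph, $N_x=\{y:(x,y)\in\mathcal E\}$, $\alpha_x,\beta_x$ non-negative integers. A partial allocation state is a matrix $W\in\mathbb N^{\mathcal X\times\mathcal X}$ with $W_{xy}=0$ whenever $(x,y)\notin\mathcal E$, $W^x:=\sum_yW_{xy}\le\alpha_x$, $W_y:=\sum_xW_{xy}\le\beta_y$; it is an allocation state if $W^x=\alpha_x$ for all $x$; $\mathcal W_p,\mathcal W$ denote these sets; $e_{xy}$ is the matrix unit. Fix reals $\lambda_y$, $k_c,k_a\ge0$, $\gamma>0$ and let $f_{xy}(W)=\lambda_y-k_cW_y/\beta_y+k_aW_{xy}$ (in $\Psi$ the term with $s=0$ contributes $\lambda_y$, i.e. $0/0$ is read as $0$). Let $\mathcal X^x(W)=\{y\in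 N_x:W_y<\beta_y\}$ and $p_y(W,x)=e^{\gamma f_{xy}(W+e_{xy})}/\sum_{y'\in\mathcal X^x(W)}e^{\gamma f_{xy'}(W+e_{xy'})}$ for $y\in\mathcal X^x(W)$. Let $P_{\rm all}(W,x),P_{\rm dis}(W,x)\ge0$ with sum $1$, $P_{\rm all}(W,x)=0$ if $W^x=\alpha_x$, $P_{\rm dis}(W,x)=0$ if $W^x=0$. $W(t)$ is the continuous-time Markov process on $\mathcal W_p$ in which each unit $x$ activates at the times of an independent Poisson clock of rate $\nu_x\ge0$; upon activation in state $W$, with probability $P_{\rm all}(W,x)$ unit $x$ chooses $y^*\in\mathcal X^x(W)$ with probability $p_{y^*}(W,x)$ and the state becomes $W+e_{xy^*}$ (nothing happens if $\mathcal X^x(W)=\emptyset$); with probability $P_{\rm dis}(W,x)$ it chooses $\bar y$ with probability $W_{x\bar y}/W^x$, then $y^*\in\mathcal X^x(W-e_{x\bar y})$ with probability $p_{y^*}(W-e_{x\bar y},x)$, and the state becomes $W-e_{x\bar y}+e_{xy^*}$. *)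

theory Defs
  imports Complex_Main
begin

definition row_sum :: "'a set \<Rightarrow> ('a \<Rightarrow> 'a \<Rightarrow> nat) \<Rightarrow> 'a \<Rightarrow> nat" where
  "row_sum X W x = (\<Sum>y\<in>X. W x y)"

definition col_sum :: "'a set \<Rightarrow> ('a \<Rightarrow> 'a \<Rightarrow> nat) \<Rightarrow> 'a \<Rightarrow> nat" where
  "col_sum X W y = (\<Sum>x\<in>X. W x y)"

definition partial_alloc_states ::
  "'a set \<Rightarrow> ('a \<times> 'a) set \<Rightarrow> ('a \<Rightarrow> nat) \<Rightarrow> ('a \<Rightarrow> nat) \<Rightarrow> ('a \<Rightarrow> 'a \<Rightarrow> nat) set" where
  "partial_alloc_states X E alpha beta =
     {W. (\<forall>x y. (x, y) \<notin> E \<longrightarrow> W x y = 0) \<and>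
         (\<forall>x\<in>X. row_sum X W x \<le> alpha x) \<and> (\<forall>y\<in>X. col_sum X W y \<le> beta y)}"

definition alloc_states ::
  "'a set \<Rightarrow> ('a \<times> 'a) set \<Rightarrow> ('a \<Rightarrow> nat) \<Rightarrow> ('a \<Rightarrow> nat) \<Rightarrow> ('a \<Rightarrow> 'a \<Rightarrow> nat) set" where
  "alloc_states X E alpha beta =
     {W \<in> partial_alloc_states X E alpha beta. \<forall>x\<in>X. row_sum X W x = alpha x}"

definition add_unit :: "('a \<Rightarrow> 'a \<Rightarrow> nat) \<Rightarrow> 'a \<Rightarrow> 'a \<Rightarrow> ('a \<Rightarrow> 'a \<Rightarrow> nat)" where
  "add_unit W x y = W(x := (W x)(y := W x y + 1))"

definition sub_unit :: "('a \<Rightarrow> 'a \<Rightarrow> nat) \<Rightarrow> 'a \<Rightarrow> 'a \<Rightarrow> ('a \<Rightarrow> 'a \<Rightarrow> nat)" where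
  "sub_unit W x y = W(x := (W x)(y := W x y - 1))"

definition avail :: "'a set \<Rightarrow> ('a \<times> 'a) set \<Rightarrow> ('a \<Rightarrow> nat) \<Rightarrow> ('a \<Rightarrow> 'a \<Rightarrow> nat) \<Rightarrow> 'a \<Rightarrow> 'a set" where
  "avail X E beta W x = {y. (x, y) \<in> E \<and> col_sum X W y < beta y}"

definition fval :: "'a set \<Rightarrow> ('a \<Rightarrow> real) \<Rightarrow> real \<Rightarrow> real \<Rightarrow> ('a \<Rightarrow> nat)
    \<Rightarrow> ('a \<Rightarrow> 'a \<Rightarrow> nat) \<Rightarrow> 'a \<Rightarrow> 'a \<Rightarrow> real" where
  "fval X lam kc ka beta W x y =
     lam y - kc * real (col_sum X W y) / real (beta y) + ka * real (W x y)"

definition choice_prob :: "'a set \<Rightarrow> ('a \<times> 'a) set \<Rightarrow> ('a \<Rightarrow> real) \<Rightarrow> real \<Rightarrow> real \<Rightarrow> real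
    \<Rightarrow> ('a \<Rightarrow> nat) \<Rightarrow> ('a \<Rightarrow> 'a \<Rightarrow> nat) \<Rightarrow> 'a \<Rightarrow> 'a \<Rightarrow> real" where
  "choice_prob X E lam kc ka gamma beta W x y =
     exp (gamma * fval X lam kc ka beta (add_unit W x y) x y) /
     (\<Sum>y'\<in>avail X E beta W x. exp (gamma * fval X lam kc ka beta (add_unit W x y') x y'))"

text \<open>Transition rate P_{W,W'} of the continuous-time Markov process W(t) from W to W'
  (meaningful for W \<noteq> W').\<close>
definition trans_rate :: "'a set \<Rightarrow> ('a \<times> 'a) set \<Rightarrow> ('a \<Rightarrow> real) \<Rightarrow> real \<Rightarrow> real \<Rightarrow> real
    \<Rightarrow> ('a \<Rightarrow> nat) \<Rightarrow> ('a \<Rightarrow> real)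
    \<Rightarrow> (('a \<Rightarrow> 'a \<Rightarrow> nat) \<Rightarrow> 'a \<Rightarrow> real) \<Rightarrow> (('a \<Rightarrow> 'a \<Rightarrow> nat) \<Rightarrow> 'a \<Rightarrow> real)
    \<Rightarrow> ('a \<Rightarrow> 'a \<Rightarrow> nat) \<Rightarrow> ('a \<Rightarrow> 'a \<Rightarrow> nat) \<Rightarrow> real" where
  "trans_rate X E lam kc ka gamma beta nu Pall Pdis W W' =
     (\<Sum>x\<in>X. nu x *
        (Pall W x *
           (\<Sum>y\<in>avail X E beta W x.
              if add_unit W x y = W' then choice_prob X E lam kc ka gamma beta W x y else 0)
         + Pdis W x *
           (\<Sum>yb\<in>X. real (W x yb) / real (row_sum X W x) *
              (\<Sum>y\<in>avail X E beta (sub_unit W x yb) x.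
                 if add_unit (sub_unit W x yb) x y = W'
                 then choice_prob X E lam kc ka gamma beta (sub_unit W x yb) x y else 0))))"

text \<open>Psi(W); the term with s = 0 and beta_y = 0 gives lambda_y since x / 0 = 0 in Isabelle.\<close>
definition Psi :: "'a set \<Rightarrow> ('a \<Rightarrow> real) \<Rightarrow> real \<Rightarrow> real \<Rightarrow> ('a \<Rightarrow> nat)
    \<Rightarrow> ('a \<Rightarrow> 'a \<Rightarrow> nat) \<Rightarrow> real" where
  "Psi X lam kc ka beta W =
     (\<Sum>y\<in>X. \<Sum>s = 0..col_sum X W y. lam y - kc * real s / real (beta y))
     + ka * (\<Sum>x\<in>X. \<Sum>y\<in>X. \<Sum>s = 0..W x y. real s)"

definition multinom :: "'a set \<Rightarrow> ('a \<Rightarrow> nat) \<Rightarrow> ('a \<Rightarrow> 'a \<Rightarrow> nat) \<Rightarrow> real" where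
  "multinom X alpha W =
     (\<Prod>x\<in>X. fact (alpha x)) / (\<Prod>x\<in>X. \<Prod>y\<in>X. fact (W x y))"

end

theory Submission
  imports Defs
begin

lemma add_unit_app: "add_unit V x b x' y' = V x' y' + (if x' = x \<and> y' = b then 1 else 0)"
  by (simp add: add_unit_def)

lemma add_sub_same: "1 \<le> W x a \<Longrightarrow> add_unit (sub_unit W x a) x a = W"
  by (auto simp: add_unit_def sub_unit_def fun_eq_iff)

lemma sub_add_same: "sub_unit (add_unit V x b) x b = V"
  by (auto simp: add_unit_def sub_unit_def fun_eq_iff)

lemma sub_app: "1 \<le> W x a \<Longrightarrow> W x' y' = sub_unit W x a x' y' + (if x' = x \<and> y' = a then 1 else 0)"
  by (auto simp: sub_unit_def)

lemma col_sum_add: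
  assumes "finite X" "x \<in> X"
  shows "col_sum X (add_unit V x b) y = col_sum X V y + (if y = b then 1 else 0)"
proof -
  have "col_sum X (add_unit V x b) y = (\<Sum>x'\<in>X. V x' y + (if x' = x \<and> y = b then 1 else 0))"
    unfolding col_sum_def add_unit_app by simp
  also have "\<dots> = col_sum X V y + (\<Sum>x'\<in>X. (if x' = x then (if y = b then 1 else 0) else 0))"
    unfolding col_sum_def sum.distrib by (intro arg_cong2[where f="(+)"] sum.cong) auto
  also have "\<dots> = col_sum X V y + (if y = b then 1 else 0)" using assms by simp
  finally show ?thesis .
qed

definition Bprod :: "'a set \<Rightarrow> ('a \<Rightarrow> 'a \<Rightarrow> nat) \<Rightarrow> real" where
  "Bprod X V = (\<Prod>x\<in>X. \<Prod>y\<in>X. fact (V x y))"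

lemma Bprod_pos: "Bprod X V > 0"
  unfolding Bprod_def by (intro prod_pos) auto

lemma Bprod_add:
  assumes "finite X" "x \<in> X" "b \<in> X"
  shows "Bprod X (add_unit V x b) = Bprod X V * (real (V x b) + 1)"
proof -
  have pt: "(fact (add_unit V x b x' y) :: real) = fact (V x' y) * (if x' = x then (if y = b then real (V x b) + 1 else 1) else 1)" for x' y
    by (auto simp: add_unit_app fact_Suc)
  have "Bprod X (add_unit V x b) = (\<Prod>x'\<in>X. (\<Prod>y\<in>X. fact (V x' y)) * (\<Prod>y\<in>X. (if x' = x then (if y = b then real (V x b) + 1 else 1) else 1)))"
    unfolding Bprod_def pt prod.distrib ..
  also have "\<dots> = Bprod X V * (\<Prod>x'\<in>X. (\<Prod>y\<in>X. (if x' = x then (if y = b then real (V x b) + 1 else 1) else 1)))"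
    unfolding Bprod_def prod.distrib ..
  also have "(\<Prod>x'\<in>X. (\<Prod>y\<in>X. (if x' = x then (if y = b then real (V x b) + 1 else 1) else 1)))
       = (\<Prod>x'\<in>X. (if x' = x then (\<Prod>y\<in>X. (if y = b then real (V x b) + 1 else 1)) else 1))"
    by (intro prod.cong) auto
  also have "\<dots> = real (V x b) + 1" using assms by simp
  finally show ?thesis .
qed

lemma Psi_add:
  assumes "finite X" "x \<in> X" "a \<in> X"
  shows "Psi X lam kc ka beta (add_unit V x a) = Psi X lam kc ka beta V + fval X lam kc ka beta (add_unit V x a) x a"
proof -
  have p1: "(\<Sum>s = 0..col_sum X (add_unit V x a) y. lam y - kc * real s / real (beta y))
      = (\<Sum>s = 0..col_sum X V y. lam y - kc * real s / real (beta y))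
        + (if y = a then lam a - kc * real (col_sum X V a + 1) / real (beta a) else 0)" for y
    using assms by (auto simp: col_sum_add)
  have p2: "(\<Sum>s = 0..add_unit V x a x' y. real s) = (\<Sum>s = 0..V x' y. real s)
        + (if x' = x then (if y = a then real (V x a) + 1 else 0) else 0)" for x' y
    by (auto simp: add_unit_app)
  have q: "(\<Sum>x'\<in>X. \<Sum>y\<in>X. (if x' = x then (if y = a then real (V x a) + 1 else 0) else 0))
      = (\<Sum>x'\<in>X. (if x' = x then (\<Sum>y\<in>X. (if y = a then real (V x a) + 1 else 0)) else 0))"
    by (intro sum.cong) auto
  have "Psi X lam kc ka beta (add_unit V x a) =
     (\<Sum>y\<in>X. \<Sum>s = 0..col_sum X V y. lam y - kc * real s / real (beta y))
       + (\<Sum>y\<in>X. (if y = a then lam a - kc * real (col_sum X V a + 1) / real (beta a) else 0))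
     + ka * ((\<Sum>x'\<in>X. \<Sum>y\<in>X. \<Sum>s = 0..V x' y. real s)
       + (\<Sum>x'\<in>X. \<Sum>y\<in>X. (if x' = x then (if y = a then real (V x a) + 1 else 0) else 0)))"
    unfolding Psi_def p1 p2 sum.distrib by (rule refl)
  also have "\<dots> = Psi X lam kc ka beta V + fval X lam kc ka beta (add_unit V x a) x a"
    unfolding q using assms by (simp add: Psi_def fval_def col_sum_add add_unit_app algebra_simps add_divide_distrib)
  finally show ?thesis .
qed


definition Tm where
  "Tm X E lam kc ka gamma beta W W' x a b = real (W x a) *
     (if b \<in> avail X E beta (sub_unit W x a) x \<and> add_unit (sub_unit W x a) x b = W'
      then choice_prob X E lam kc ka gamma beta (sub_unit W x a) x b else 0)"

lemma Tm_eq: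
  assumes X: "finite X" "E \<subseteq> X \<times> X"
    and WW: "W \<in> alloc_states X E alpha beta" "W' \<in> alloc_states X E alpha beta" "W \<noteq> W'"
    and xab: "x \<in> X" "a \<in> X" "b \<in> X"
  shows "Tm X E lam kc ka gamma beta W W' x a b =
    (if a \<noteq> b \<and> 1 \<le> W x a \<and> W' = add_unit (sub_unit W x a) x b
     then real (W x a) * choice_prob X E lam kc ka gamma beta (sub_unit W x a) x b else 0)"
proof (cases "a \<noteq> b \<and> 1 \<le> W x a \<and> W' = add_unit (sub_unit W x a) x b")
  case True
  define V where "V = sub_unit W x a"
  have W'V: "W' = add_unit V x b" using True V_def by simp
  have "W' x b \<ge> 1" using W'V by (simp add: add_unit_app)
  moreover have "\<forall>x y. (x, y) \<notin> E \<longrightarrow> W' x y = 0" using WW(2)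
    by (simp add: alloc_states_def partial_alloc_states_def)
  ultimately have "(x, b) \<in> E" by fastforce
  moreover have "col_sum X W' b \<le> beta b" using WW(2) xab
    by (simp add: alloc_states_def partial_alloc_states_def)
  then have "col_sum X V b < beta b" using W'V col_sum_add[OF X(1) xab(1)] by simp
  ultimately have "b \<in> avail X E beta V x" by (simp add: avail_def)
  then show ?thesis using True unfolding Tm_def V_def by simp
next
  case False
  show ?thesis
  proof (cases "W x a = 0")
    case True then show ?thesis using False by (simp add: Tm_def)
  next
    case nz: False
    have "\<not> (add_unit (sub_unit W x a) x b = W')"
    proof
      assume h: "add_unit (sub_unit W x a) x b = W'"
      show False
      proof (cases "a = b")
        case True then show False using h add_sub_same[of W x a] nz WW(3) by simp
      next
        case False then show False using h nz \<open>\<not> (a \<noteq> b \<and> 1 \<le> W x a \<and> W' = add_unit (sub_unit W x a) x b)\<close> by auto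
      qed
    qed
    then show ?thesis using False by (simp add: Tm_def)
  qed
qed

lemma P_sym:
  shows "(a \<noteq> b \<and> 1 \<le> W x a \<and> W' = add_unit (sub_unit W x a) x b) \<longleftrightarrow>
         (b \<noteq> a \<and> 1 \<le> W' x b \<and> W = add_unit (sub_unit W' x b) x a)"
proof
  assume h: "a \<noteq> b \<and> 1 \<le> W x a \<and> W' = add_unit (sub_unit W x a) x b"
  then have "sub_unit W' x b = sub_unit W x a" by (simp add: sub_add_same)
  moreover have "1 \<le> W' x b" using h by (simp add: add_unit_app)
  ultimately show "b \<noteq> a \<and> 1 \<le> W' x b \<and> W = add_unit (sub_unit W' x b) x a"
    using h add_sub_same[of W x a] by metis
next
  assume h: "b \<noteq> a \<and> 1 \<le> W' x b \<and> W = add_unit (sub_unit W' x b) x a"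
  then have "sub_unit W x a = sub_unit W' x b" by (simp add: sub_add_same)
  moreover have "1 \<le> W x a" using h by (simp add: add_unit_app)
  ultimately show "a \<noteq> b \<and> 1 \<le> W x a \<and> W' = add_unit (sub_unit W x a) x b"
    using h add_sub_same[of W' x b] by metis
qed

lemma exp_arr: "M * exp (g * (P + fa)) * (r * (exp (g * fb) / Z)) = M * r * exp (g * P) * (exp (g*fa) * exp (g*fb) / (Z::real))"
  by (simp add: distrib_left exp_add mult_ac)

lemma exp_arr2: "M * exp (g * (P + fb)) * (r * (exp (g * fa) / Z)) = M * r * exp (g * P) * (exp (g*fa) * exp (g*fb) / (Z::real))"
  by (simp add: distrib_left exp_add mult_ac)

lemma balance_main:
  assumes X: "finite X" and xab: "x \<in> X" "a \<in> X" "b \<in> X"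
  shows "multinom X alpha (add_unit V x a) * exp (gamma * Psi X lam kc ka beta (add_unit V x a))
          * (real (add_unit V x a x a) * choice_prob X E lam kc ka gamma beta V x b)
       = multinom X alpha (add_unit V x b) * exp (gamma * Psi X lam kc ka beta (add_unit V x b))
          * (real (add_unit V x b x b) * choice_prob X E lam kc ka gamma beta V x a)"
proof -
  define F where "F = (\<Prod>x\<in>X. fact (alpha x) :: real)"
  define Z where "Z = (\<Sum>y'\<in>avail X E beta V x. exp (gamma * fval X lam kc ka beta (add_unit V x y') x y'))"
  define fa where "fa = fval X lam kc ka beta (add_unit V x a) x a"
  define fb where "fb = fval X lam kc ka beta (add_unit V x b) x b"
  have m: "multinom X alpha (add_unit V x c) * real (add_unit V x c x c) = F / Bprod X V" if "c \<in> X" for c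
  proof -
    have B: "Bprod X (add_unit V x c) = Bprod X V * (real (V x c) + 1)" using Bprod_add[OF X xab(1) that] .
    have r: "real (add_unit V x c x c) = real (V x c) + 1" by (simp add: add_unit_app)
    have "multinom X alpha (add_unit V x c) = F / Bprod X (add_unit V x c)"
      unfolding multinom_def F_def Bprod_def ..
    moreover have "Bprod X V \<noteq> 0" using Bprod_pos[of X V] by simp
    moreover have "real (V x c) + 1 \<noteq> 0" by simp
    moreover have g: "\<And>w B::real. B \<noteq> 0 \<Longrightarrow> w \<noteq> 0 \<Longrightarrow> F / (B * w) * w = F / B" by simp
    ultimately show ?thesis unfolding r B by metis
  qed
  have LHS: "multinom X alpha (add_unit V x a) * exp (gamma * Psi X lam kc ka beta (add_unit V x a))
          * (real (add_unit V x a x a) * choice_prob X E lam kc ka gamma beta V x b)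
     = (multinom X alpha (add_unit V x a) * real (add_unit V x a x a)) * exp (gamma * Psi X lam kc ka beta V)
        * (exp (gamma * fa) * exp (gamma * fb) / Z)"
    unfolding Psi_add[OF X xab(1) xab(2)] choice_prob_def Z_def[symmetric] fa_def[symmetric] fb_def[symmetric]
    by (rule exp_arr)
  have RHS: "multinom X alpha (add_unit V x b) * exp (gamma * Psi X lam kc ka beta (add_unit V x b))
          * (real (add_unit V x b x b) * choice_prob X E lam kc ka gamma beta V x a)
     = (multinom X alpha (add_unit V x b) * real (add_unit V x b x b)) * exp (gamma * Psi X lam kc ka beta V)
        * (exp (gamma * fa) * exp (gamma * fb) / Z)"
    unfolding Psi_add[OF X xab(1) xab(3)] choice_prob_def Z_def[symmetric] fa_def[symmetric] fb_def[symmetric]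
    by (rule exp_arr2)
  show ?thesis unfolding LHS RHS m[OF xab(2)] m[OF xab(3)] ..
qed

lemma term_balance:
  assumes X: "finite X" "E \<subseteq> X \<times> X"
    and WW: "W \<in> alloc_states X E alpha beta" "W' \<in> alloc_states X E alpha beta" "W \<noteq> W'"
    and xab: "x \<in> X" "a \<in> X" "b \<in> X"
  shows "multinom X alpha W * exp (gamma * Psi X lam kc ka beta W) * Tm X E lam kc ka gamma beta W W' x a b
       = multinom X alpha W' * exp (gamma * Psi X lam kc ka beta W') * Tm X E lam kc ka gamma beta W' W x b a"
proof (cases "a \<noteq> b \<and> 1 \<le> W x a \<and> W' = add_unit (sub_unit W x a) x b")
  case True
  define V where "V = sub_unit W x a"
  have P2: "b \<noteq> a \<and> 1 \<le> W' x b \<and> W = add_unit (sub_unit W' x b) x a" using iffD1[OF P_sym True] .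
  have eW: "W = add_unit V x a" unfolding V_def by (rule sym, rule add_sub_same, rule conjunct1[OF conjunct2[OF True]])
  have eW': "W' = add_unit V x b" unfolding V_def by (rule conjunct2[OF conjunct2[OF True]])
  have sV: "sub_unit W' x b = V" unfolding eW' by (rule sub_add_same)
  have t1: "Tm X E lam kc ka gamma beta W W' x a b = real (W x a) * choice_prob X E lam kc ka gamma beta V x b"
    unfolding V_def by (subst Tm_eq[OF X WW xab], subst if_P[OF True], rule refl)
  have t2: "Tm X E lam kc ka gamma beta W' W x b a = real (W' x b) * choice_prob X E lam kc ka gamma beta V x a"
    by (subst Tm_eq[OF X WW(2,1) WW(3)[symmetric] xab(1,3,2)], subst if_P[OF P2], unfold sV, rule refl)
  show ?thesis unfolding t1 t2 using balance_main[OF X(1) xab, where V=V and alpha=alpha and gamma=gamma and lam=lam and kc=kc and ka=ka and beta=beta and E=E]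
    unfolding eW[symmetric] eW'[symmetric] .
next
  case False
  have P2: "\<not> (b \<noteq> a \<and> 1 \<le> W' x b \<and> W = add_unit (sub_unit W' x b) x a)"
    using False P_sym[of a b W x W'] by (rule contrapos_nn[OF _ iffD2])
  have t1: "Tm X E lam kc ka gamma beta W W' x a b = 0"
    by (subst Tm_eq[OF X WW xab], subst if_not_P[OF False], rule refl)
  have t2: "Tm X E lam kc ka gamma beta W' W x b a = 0"
    by (subst Tm_eq[OF X WW(2,1) WW(3)[symmetric] xab(1,3,2)], subst if_not_P[OF P2], rule refl)
  show ?thesis unfolding t1 t2 by simp
qed

lemma absl:
  fixes nu S r :: real and w :: "'b \<Rightarrow> real" and h :: "'b \<Rightarrow> 'b \<Rightarrow> real"
  shows "nu * (0 * S + 1 * (\<Sum>a\<in>X. w a / r * (\<Sum>b\<in>X. h a b)))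
       = nu / r * (\<Sum>a\<in>X. \<Sum>b\<in>X. w a * h a b)"
proof -
  have e1: "(\<Sum>a\<in>X. \<Sum>b\<in>X. w a * h a b) = (\<Sum>a\<in>X. w a * (\<Sum>b\<in>X. h a b))"
    by (simp add: sum_distrib_left)
  have e2: "(\<Sum>a\<in>X. w a / r * (\<Sum>b\<in>X. h a b)) = (\<Sum>a\<in>X. w a * (\<Sum>b\<in>X. h a b)) / r"
    by (simp add: sum_divide_distrib)
  show ?thesis unfolding e1 e2 by simp
qed

lemma rate_form:
  assumes X: "finite X" "E \<subseteq> X \<times> X"
    and P: "\<forall>V\<in>partial_alloc_states X E alpha beta. \<forall>x\<in>X.
           Pall V x \<ge> 0 \<and> Pdis V x \<ge> 0 \<and> Pall V x + Pdis V x = 1 \<and>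
           (row_sum X V x = alpha x \<longrightarrow> Pall V x = 0) \<and>
           (row_sum X V x = 0 \<longrightarrow> Pdis V x = 0)"
    and W: "W \<in> alloc_states X E alpha beta"
  shows "trans_rate X E lam kc ka gamma beta nu Pall Pdis W W' =
     (\<Sum>x\<in>X. nu x / real (alpha x) * (\<Sum>a\<in>X. \<Sum>b\<in>X. Tm X E lam kc ka gamma beta W W' x a b))"
  unfolding trans_rate_def
proof (rule sum.cong[OF refl])
  fix x assume x: "x \<in> X"
  have Wp: "W \<in> partial_alloc_states X E alpha beta" and rs: "row_sum X W x = alpha x"
    using W x by (auto simp: alloc_states_def)
  have h: "Pall W x + Pdis W x = 1" "row_sum X W x = alpha x \<longrightarrow> Pall W x = 0"
    using P Wp x by blast+
  have pa: "Pall W x = 0" "Pdis W x = 1" using h rs by auto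
  have av: "avail X E beta V x = X \<inter> avail X E beta V x" for V
    using X(2) by (auto simp: avail_def)
  have inner: "(\<Sum>y\<in>avail X E beta (sub_unit W x yb) x.
                 if add_unit (sub_unit W x yb) x y = W'
                 then choice_prob X E lam kc ka gamma beta (sub_unit W x yb) x y else 0)
     = (\<Sum>b\<in>X. if b \<in> avail X E beta (sub_unit W x yb) x \<and> add_unit (sub_unit W x yb) x b = W'
                 then choice_prob X E lam kc ka gamma beta (sub_unit W x yb) x b else 0)" for yb
    by (subst av, subst sum.inter_restrict[OF X(1)]) (auto intro: sum.cong)
  show "nu x *
        (Pall W x *
           (\<Sum>y\<in>avail X E beta W x.
              if add_unit W x y = W' then choice_prob X E lam kc ka gamma beta W x y else 0)
         + Pdis W x *
           (\<Sum>yb\<in>X. real (W x yb) / real (row_sum X W x) *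
              (\<Sum>y\<in>avail X E beta (sub_unit W x yb) x.
                 if add_unit (sub_unit W x yb) x y = W'
                 then choice_prob X E lam kc ka gamma beta (sub_unit W x yb) x y else 0)))
      = nu x / real (alpha x) * (\<Sum>a\<in>X. \<Sum>b\<in>X. Tm X E lam kc ka gamma beta W W' x a b)"
    unfolding pa rs inner Tm_def by (rule absl)
qed

theorem proposition2:
  fixes X :: "'a set" and E :: "('a \<times> 'a) set"
    and alpha beta :: "'a \<Rightarrow> nat" and lam :: "'a \<Rightarrow> real"
    and kc ka gamma :: real and nu :: "'a \<Rightarrow> real"
    and Pall Pdis :: "('a \<Rightarrow> 'a \<Rightarrow> nat) \<Rightarrow> 'a \<Rightarrow> real"
    and W W' :: "'a \<Rightarrow> 'a \<Rightarrow> nat"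
  assumes "finite X" and "E \<subseteq> X \<times> X"
    and "kc \<ge> 0" and "ka \<ge> 0" and "gamma > 0"
    and "\<forall>x\<in>X. nu x \<ge> 0"
    and "\<forall>V\<in>partial_alloc_states X E alpha beta. \<forall>x\<in>X.
           Pall V x \<ge> 0 \<and> Pdis V x \<ge> 0 \<and> Pall V x + Pdis V x = 1 \<and>
           (row_sum X V x = alpha x \<longrightarrow> Pall V x = 0) \<and>
           (row_sum X V x = 0 \<longrightarrow> Pdis V x = 0)"
    and "W \<in> alloc_states X E alpha beta" and "W' \<in> alloc_states X E alpha beta"
    and "W \<noteq> W'"
  shows "multinom X alpha W * exp (gamma * Psi X lam kc ka beta W)
           * trans_rate X E lam kc ka gamma beta nu Pall Pdis W W'
       = multinom X alpha W' * exp (gamma * Psi X lam kc ka beta W')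
           * trans_rate X E lam kc ka gamma beta nu Pall Pdis W' W"
proof -
  let ?T = "Tm X E lam kc ka gamma beta"
  let ?cW = "multinom X alpha W * exp (gamma * Psi X lam kc ka beta W)"
  let ?cW' = "multinom X alpha W' * exp (gamma * Psi X lam kc ka beta W')"
  have dist: "c * (\<Sum>x\<in>X. g x * (\<Sum>a\<in>X. \<Sum>b\<in>X. f x a b)) =
      (\<Sum>x\<in>X. g x * (\<Sum>a\<in>X. \<Sum>b\<in>X. c * f x a b))" for c :: real and g f
    by (simp add: sum_distrib_left mult.left_commute)
  have "?cW * trans_rate X E lam kc ka gamma beta nu Pall Pdis W W'
     = (\<Sum>x\<in>X. nu x / real (alpha x) * (\<Sum>a\<in>X. \<Sum>b\<in>X. ?cW * ?T W W' x a b))"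
    unfolding rate_form[OF assms(1,2,7,8)] by (rule dist)
  also have "\<dots> = (\<Sum>x\<in>X. nu x / real (alpha x) * (\<Sum>a\<in>X. \<Sum>b\<in>X. ?cW' * ?T W' W x b a))"
  proof (rule sum.cong[OF refl])
    fix x assume x: "x \<in> X"
    have "(\<Sum>a\<in>X. \<Sum>b\<in>X. ?cW * ?T W W' x a b) = (\<Sum>a\<in>X. \<Sum>b\<in>X. ?cW' * ?T W' W x b a)"
      by (intro sum.cong refl term_balance[OF assms(1,2,8,9,10) x])
    then show "nu x / real (alpha x) * (\<Sum>a\<in>X. \<Sum>b\<in>X. ?cW * ?T W W' x a b)
      = nu x / real (alpha x) * (\<Sum>a\<in>X. \<Sum>b\<in>X. ?cW' * ?T W' W x b a)" by (rule arg_cong)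
  qed
  also have "\<dots> = (\<Sum>x\<in>X. nu x / real (alpha x) * (\<Sum>b\<in>X. \<Sum>a\<in>X. ?cW' * ?T W' W x b a))"
    by (rule sum.cong[OF refl], rule arg_cong, rule sum.swap)
  also have "\<dots> = ?cW' * trans_rate X E lam kc ka gamma beta nu Pall Pdis W' W"
    unfolding rate_form[OF assms(1,2,7,9)] by (rule dist[symmetric])
  finally show ?thesis .
qed

end
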